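(* Fix an instance of MCND and a partial aggregation $\mathcal{B}$ (see context). (i) If $(x,y,z)$ is a feasible solution of the LP relaxation of the PAe formulation built on $\mathcal{B}$, then $(x,y)$ is a feasible solution of the LP relaxation of the PAi formulation built on the same $\mathcal{B}$ (with the same objective value). (ii) The converse fails in general: there exist an instance and a partial aggregation $\mathcal{B}$ for which the LP relaxation of PAi has a feasible solution $(x,y)$ such that there is no $z$ making $(x,y,z)$ feasible for the LP relaxation of PAe. (That is, PAe is stronger than PAi.)
   Context: An instance of MCND consists of a directed graph $G=(\mathcal{N},\mathcal{A})$, a finite set $\mathcal{K}$ of commodities, each $k\in\mathcal{K}$ having an origin $o^k\in\mathcal{N}$, a destination $s^k\in\mathcal{N}$ and a demand $d^k\ge 0$, and for each arc $(i,j)\in\mathcal{A}$ a capacity $u_{ij}$, a per-unit flow cost $c_{ij}$ and a fixed cost $f_{ij}$, all nonnegative. Let $o_i^k=1$ if $i=o^k$ and $0$ otherwise, $s_i^k=1$ if $i=s^k$ and $0$ otherwise, $\mathcal{N}_i^+=\{j:(i,j)\in\mathcal{A}\}$, $\mathcal{N}_i^-=\{j:(j,i)\in\mathcal{A}\}$. Dispersion: a nonempty set $\mathcal{K}_b\subseteq\mathcal{K}$ of commodities sharing a common origin, together with, for every arc $(i,j)\in\mathcal{A}$, a partition of $\mathcal{K}_b$ into $\mathcal{K}_b^{ij}$ (aggregated on $(i,j)$) and $\mathcal{D}_b^{ij}$ (disaggregated on $(i,j)$); either part may be empty. Let $\mathcal{G}_b^{ij}$ be the family consisting of the set $\mathcal{K}_b^{ij}$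 (if nonempty) together with the singletons $\{k\}$, $k\in\mathcal{D}_b^{ij}$. A partial aggregation is a set $\mathcal{B}$ of dispersions such that every $k\in\mathcal{K}$ lies in $\mathcal{K}_b$ for exactly one $b\in\mathcal{B}$. LP relaxation of PA (for $\mathcal{B}$): variables $x_{ij}^D\ge0$ for $(i,j)\in\mathcal{A}$, $b\in\mathcal{B}$, $D\in\mathcal{G}_b^{ij}$ (since the $\mathcal{K}_b$ are disjoint, $D$ determines $b$), and $0\le y_{ij}\le1$; minimize $\sum_{(i,j)}c_{ij}\sum_{b}\sum_{D\in\mathcal{G}_b^{ij}}x_{ij}^D+\sum_{(i,j)}f_{ij}y_{ij}$ subject to: for all $b\in\mathcal{B}$, $i\in\mathcal{N}$: $\sum_{j\in\mathcal{N}_i^+}\sum_{D\in\mathcal{G}_b^{ij}}x_{ij}^D-\sum_{j\in\mathcal{N}_i^-}\sum_{D\in\mathcal{G}_b^{ji}}x_{ji}^D=\sum_{k\in\mathcal{K}_b}(o_i^k-s_i^k)d^k$; for all $(i,j)$: $\sum_b\sum_{D\in\mathcal{G}_b^{ij}}x_{ij}^D\le u_{ij}y_{ij}$; for all $(i,j),b,D\in\mathcal{G}_b^{ij}$: $x_{ij}^D\le(\sum_{k\in D}d^k)y_{ij}$. LP relaxation of PAi: the PA LP plus, for all $b\in\mathcal{B}$, $k\in\mathcal{K}_b$, $i\in\mathcal{N}$: $\sum_{j\in\mathcal{N}_i^+}\sum_{D\in\mathcal{G}_b^{ij}:k\in D}x_{ij}^D-\sum_{j\in\mathcal{N}_i^-}\sum_{D\in\mathcal{G}_b^{ji}:D=\{k\}}x_{ji}^D\ge(o_i^k-s_i^k)d^k$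 and $\sum_{j\in\mathcal{N}_i^+}\sum_{D\in\mathcal{G}_b^{ij}:D=\{k\}}x_{ij}^D-\sum_{j\in\mathcal{N}_i^-}\sum_{D\in\mathcal{G}_b^{ji}:k\in D}x_{ji}^D\le(o_i^k-s_i^k)d^k$. LP relaxation of PAe: the PA LP plus the following. For $b\in\mathcal{B}$, $i\in\mathcal{N}$ let $\mathcal{L}_b^i=\{k\in\mathcal{K}_b:k\in\mathcal{D}_b^{ji}\text{ for some }j\in\mathcal{N}_i^-\text{ or }k\in\mathcal{D}_b^{ij}\text{ for some }j\in\mathcal{N}_i^+\}$; $\mathcal{M}_b^i=\{\{k\}:k\in\mathcal{L}_b^i\}\cup\{\mathcal{K}_b\setminus\mathcal{L}_b^i\}$ (the last set only if nonempty); $\check{\mathcal{T}}_b^i$ = the set of distinct nonempty sets among $\{\mathcal{K}_b^{ji}:j\in\mathcal{N}_i^-\}$; $\hat{\mathcal{T}}_b^i$ = the set of distinct nonempty sets among $\{\mathcal{K}_b^{ij}:j\in\mathcal{N}_i^+\}$. For every $(b,i)$ with $\mathcal{L}_b^i\neq\emptyset$ add variables $z_{CD}^{ib}\ge0$ for $C\in\check{\mathcal{T}}_b^i$, $D\in\mathcal{M}_b^i$ with $C\cap D\ne\emptyset$, and $z_{DC}^{ib}\ge0$ for $D\in\mathcal{M}_b^i$, $C\in\hat{\mathcal{T}}_b^i$ with $C\cap D\neq\emptyset$ (zero cost), and constraints: for each $D\in\mathcal{M}_b^i$: $\sum_{j\in\mathcal{N}_i^+:\,D=\{k\},k\in\mathcal{D}_b^{ij}}x_{ij}^{D}-\sum_{j\in\mathcal{N}_i^-:\,D=\{k\},k\in\mathcal{D}_b^{ji}}x_{ji}^{D}+\sum_{C\in\hat{\mathcal{T}}_b^i:C\cap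 D\neq\emptyset}z_{DC}^{ib}-\sum_{C\in\check{\mathcal{T}}_b^i:C\cap D\ne\emptyset}z_{CD}^{ib}=\sum_{k\in D}(o_i^k-s_i^k)d^k$; for each $C\in\check{\mathcal{T}}_b^i$: $\sum_{D\in\mathcal{M}_b^i:C\cap D\ne\emptyset}z_{CD}^{ib}-\sum_{j\in\mathcal{N}_i^-:\mathcal{K}_b^{ji}=C}x_{ji}^C=0$; for each $C\in\hat{\mathcal{T}}_b^i$: $\sum_{j\in\mathcal{N}_i^+:\mathcal{K}_b^{ij}=C}x_{ij}^C-\sum_{D\in\mathcal{M}_b^i:C\cap D\neq\emptyset}z_{DC}^{ib}=0$. The objective is that of PA. *)

theory Defs
  imports "HOL-Analysis.Analysis"
begin

record ('n, 'k) mcnd =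
  nodes :: "'n set"
  arcs  :: "('n \<times> 'n) set"
  comms :: "'k set"
  orig  :: "'k \<Rightarrow> 'n"
  dest  :: "'k \<Rightarrow> 'n"
  dem   :: "'k \<Rightarrow> real"
  cap   :: "'n \<times> 'n \<Rightarrow> real"
  ucost :: "'n \<times> 'n \<Rightarrow> real"
  fcost :: "'n \<times> 'n \<Rightarrow> real"

definition mcnd_instance :: "('n, 'k) mcnd \<Rightarrow> bool" where
  "mcnd_instance I \<longleftrightarrow>
     finite (nodes I) \<and> arcs I \<subseteq> nodes I \<times> nodes I \<and> (\<forall>(i,j)\<in>arcs I. i \<noteq> j) \<and>
     finite (comms I) \<and>
     (\<forall>k\<in>comms I. orig I k \<in> nodes I \<and> dest I k \<in> nodes I \<and> dem I k \<ge> 0) \<and>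
     (\<forall>a\<in>arcs I. cap I a \<ge> 0 \<and> ucost I a \<ge> 0 \<and> fcost I a \<ge> 0)"

definition netdem :: "('n, 'k) mcnd \<Rightarrow> 'n \<Rightarrow> 'k \<Rightarrow> real" where
  "netdem I i k = ((if orig I k = i then 1 else 0) - (if dest I k = i then 1 else 0)) * dem I k"

definition outarcs :: "('n, 'k) mcnd \<Rightarrow> 'n \<Rightarrow> ('n \<times> 'n) set" where
  "outarcs I i = {a \<in> arcs I. fst a = i}"

definition inarcs :: "('n, 'k) mcnd \<Rightarrow> 'n \<Rightarrow> ('n \<times> 'n) set" where
  "inarcs I i = {a \<in> arcs I. snd a = i}"

text \<open>A dispersion is a pair (K_b, agg) where agg (i,j) = K_b^{ij} is the set of commodities
  aggregated on arc (i,j); the disaggregated ones are D_b^{ij} = K_b - K_b^{ij}.\<close>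
type_synonym ('n, 'k) dispersion = "'k set \<times> ('n \<times> 'n \<Rightarrow> 'k set)"

definition Kb :: "('n, 'k) dispersion \<Rightarrow> 'k set" where
  "Kb b = fst b"

definition Kagg :: "('n, 'k) dispersion \<Rightarrow> 'n \<times> 'n \<Rightarrow> 'k set" where
  "Kagg b a = snd b a"

definition Ddis :: "('n, 'k) dispersion \<Rightarrow> 'n \<times> 'n \<Rightarrow> 'k set" where
  "Ddis b a = Kb b - Kagg b a"

definition dispersion :: "('n, 'k) mcnd \<Rightarrow> ('n, 'k) dispersion \<Rightarrow> bool" where
  "dispersion I b \<longleftrightarrow>
     Kb b \<noteq> {} \<and> Kb b \<subseteq> comms I \<and>
     (\<forall>k\<in>Kb b. \<forall>k'\<in>Kb b. orig I k = orig I k') \<and>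
     (\<forall>a\<in>arcs I. Kagg b a \<subseteq> Kb b)"

definition partial_aggregation :: "('n, 'k) mcnd \<Rightarrow> ('n, 'k) dispersion set \<Rightarrow> bool" where
  "partial_aggregation I B \<longleftrightarrow>
     (\<forall>b\<in>B. dispersion I b) \<and> (\<forall>k\<in>comms I. \<exists>!b. b \<in> B \<and> k \<in> Kb b)"

definition Gfam :: "('n, 'k) dispersion \<Rightarrow> 'n \<times> 'n \<Rightarrow> 'k set set" where
  "Gfam b a = (if Kagg b a \<noteq> {} then {Kagg b a} else {}) \<union> {{k} | k. k \<in> Ddis b a}"

text \<open>Flow variables x_{ij}^D are represented by a function x (i,j) D; only the values with
  (i,j) an arc and D in G_b^{ij} for some b in B are meaningful.  Design variables y (i,j).\<close>

definition pa_obj ::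
  "('n, 'k) mcnd \<Rightarrow> ('n, 'k) dispersion set \<Rightarrow> ('n \<times> 'n \<Rightarrow> 'k set \<Rightarrow> real) \<Rightarrow> ('n \<times> 'n \<Rightarrow> real) \<Rightarrow> real" where
  "pa_obj I B x y =
     (\<Sum>a\<in>arcs I. ucost I a * (\<Sum>b\<in>B. \<Sum>D\<in>Gfam b a. x a D)) + (\<Sum>a\<in>arcs I. fcost I a * y a)"

definition PA_LP_feasible ::
  "('n, 'k) mcnd \<Rightarrow> ('n, 'k) dispersion set \<Rightarrow> ('n \<times> 'n \<Rightarrow> 'k set \<Rightarrow> real) \<Rightarrow> ('n \<times> 'n \<Rightarrow> real) \<Rightarrow> bool" where
  "PA_LP_feasible I B x y \<longleftrightarrow>
     (\<forall>a\<in>arcs I. \<forall>b\<in>B. \<forall>D\<in>Gfam b a. x a D \<ge> 0) \<and>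
     (\<forall>a\<in>arcs I. 0 \<le> y a \<and> y a \<le> 1) \<and>
     (\<forall>b\<in>B. \<forall>i\<in>nodes I.
        (\<Sum>a\<in>outarcs I i. \<Sum>D\<in>Gfam b a. x a D) - (\<Sum>a\<in>inarcs I i. \<Sum>D\<in>Gfam b a. x a D)
          = (\<Sum>k\<in>Kb b. netdem I i k)) \<and>
     (\<forall>a\<in>arcs I. (\<Sum>b\<in>B. \<Sum>D\<in>Gfam b a. x a D) \<le> cap I a * y a) \<and>
     (\<forall>a\<in>arcs I. \<forall>b\<in>B. \<forall>D\<in>Gfam b a. x a D \<le> (\<Sum>k\<in>D. dem I k) * y a)"

definition PAi_LP_feasible ::
  "('n, 'k) mcnd \<Rightarrow> ('n, 'k) dispersion set \<Rightarrow> ('n \<times> 'n \<Rightarrow> 'k set \<Rightarrow> real) \<Rightarrow> ('n \<times> 'n \<Rightarrow> real) \<Rightarrow> bool" where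
  "PAi_LP_feasible I B x y \<longleftrightarrow>
     PA_LP_feasible I B x y \<and>
     (\<forall>b\<in>B. \<forall>k\<in>Kb b. \<forall>i\<in>nodes I.
        (\<Sum>a\<in>outarcs I i. \<Sum>D\<in>{D\<in>Gfam b a. k \<in> D}. x a D)
          - (\<Sum>a\<in>inarcs I i. \<Sum>D\<in>{D\<in>Gfam b a. D = {k}}. x a D) \<ge> netdem I i k \<and>
        (\<Sum>a\<in>outarcs I i. \<Sum>D\<in>{D\<in>Gfam b a. D = {k}}. x a D)
          - (\<Sum>a\<in>inarcs I i. \<Sum>D\<in>{D\<in>Gfam b a. k \<in> D}. x a D) \<le> netdem I i k)"

definition Lset :: "('n, 'k) mcnd \<Rightarrow> ('n, 'k) dispersion \<Rightarrow> 'n \<Rightarrow> 'k set" where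
  "Lset I b i = {k \<in> Kb b. (\<exists>a\<in>inarcs I i. k \<in> Ddis b a) \<or> (\<exists>a\<in>outarcs I i. k \<in> Ddis b a)}"

definition Mset :: "('n, 'k) mcnd \<Rightarrow> ('n, 'k) dispersion \<Rightarrow> 'n \<Rightarrow> 'k set set" where
  "Mset I b i = {{k} | k. k \<in> Lset I b i} \<union>
     (if Kb b - Lset I b i \<noteq> {} then {Kb b - Lset I b i} else {})"

definition Tin :: "('n, 'k) mcnd \<Rightarrow> ('n, 'k) dispersion \<Rightarrow> 'n \<Rightarrow> 'k set set" where
  "Tin I b i = {Kagg b a | a. a \<in> inarcs I i \<and> Kagg b a \<noteq> {}}"

definition Tout :: "('n, 'k) mcnd \<Rightarrow> ('n, 'k) dispersion \<Rightarrow> 'n \<Rightarrow> 'k set set" where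
  "Tout I b i = {Kagg b a | a. a \<in> outarcs I i \<and> Kagg b a \<noteq> {}}"

text \<open>zin b i C D stands for z_{CD}^{ib} (C in Tin, D in M);
  zout b i D C stands for z_{DC}^{ib} (D in M, C in Tout).\<close>
definition PAe_LP_feasible ::
  "('n, 'k) mcnd \<Rightarrow> ('n, 'k) dispersion set \<Rightarrow> ('n \<times> 'n \<Rightarrow> 'k set \<Rightarrow> real) \<Rightarrow> ('n \<times> 'n \<Rightarrow> real)
   \<Rightarrow> (('n, 'k) dispersion \<Rightarrow> 'n \<Rightarrow> 'k set \<Rightarrow> 'k set \<Rightarrow> real)
   \<Rightarrow> (('n, 'k) dispersion \<Rightarrow> 'n \<Rightarrow> 'k set \<Rightarrow> 'k set \<Rightarrow> real) \<Rightarrow> bool" where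
  "PAe_LP_feasible I B x y zin zout \<longleftrightarrow>
     PA_LP_feasible I B x y \<and>
     (\<forall>b\<in>B. \<forall>i\<in>nodes I. Lset I b i \<noteq> {} \<longrightarrow>
        (\<forall>C\<in>Tin I b i. \<forall>D\<in>Mset I b i. C \<inter> D \<noteq> {} \<longrightarrow> zin b i C D \<ge> 0) \<and>
        (\<forall>D\<in>Mset I b i. \<forall>C\<in>Tout I b i. C \<inter> D \<noteq> {} \<longrightarrow> zout b i D C \<ge> 0) \<and>
        (\<forall>D\<in>Mset I b i.
           (\<Sum>a\<in>{a\<in>outarcs I i. \<exists>k. D = {k} \<and> k \<in> Ddis b a}. x a D)
           - (\<Sum>a\<in>{a\<in>inarcs I i. \<exists>k. D = {k} \<and> k \<in> Ddis b a}. x a D)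
           + (\<Sum>C\<in>{C\<in>Tout I b i. C \<inter> D \<noteq> {}}. zout b i D C)
           - (\<Sum>C\<in>{C\<in>Tin I b i. C \<inter> D \<noteq> {}}. zin b i C D)
           = (\<Sum>k\<in>D. netdem I i k)) \<and>
        (\<forall>C\<in>Tin I b i.
           (\<Sum>D\<in>{D\<in>Mset I b i. C \<inter> D \<noteq> {}}. zin b i C D)
           - (\<Sum>a\<in>{a\<in>inarcs I i. Kagg b a = C}. x a C) = 0) \<and>
        (\<forall>C\<in>Tout I b i.
           (\<Sum>a\<in>{a\<in>outarcs I i. Kagg b a = C}. x a C)
           - (\<Sum>D\<in>{D\<in>Mset I b i. C \<inter> D \<noteq> {}}. zout b i D C) = 0))"

text \<open>The objective of PAe is that of PA (the z variables have zero cost).\<close>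
definition pae_obj ::
  "('n, 'k) mcnd \<Rightarrow> ('n, 'k) dispersion set \<Rightarrow> ('n \<times> 'n \<Rightarrow> 'k set \<Rightarrow> real) \<Rightarrow> ('n \<times> 'n \<Rightarrow> real)
   \<Rightarrow> (('n, 'k) dispersion \<Rightarrow> 'n \<Rightarrow> 'k set \<Rightarrow> 'k set \<Rightarrow> real)
   \<Rightarrow> (('n, 'k) dispersion \<Rightarrow> 'n \<Rightarrow> 'k set \<Rightarrow> 'k set \<Rightarrow> real) \<Rightarrow> real" where
  "pae_obj I B x y zin zout = pa_obj I B x y"

end

theory Submission
  imports Defs
begin

lemma Gsum:
  assumes "finite (Kb b)"
  shows "(\<Sum>D\<in>Gfam b a. f D) = (if Kagg b a \<noteq> {} then f (Kagg b a) else 0) + (\<Sum>k\<in>Ddis b a. f {k})"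
proof -
  have fD: "finite (Ddis b a)" using assms unfolding Ddis_def by simp
  have e: "{{k} | k. k \<in> Ddis b a} = (\<lambda>k. {k}) ` Ddis b a" by auto
  have disj: "(if Kagg b a \<noteq> {} then {Kagg b a} else {}) \<inter> (\<lambda>k. {k}) ` Ddis b a = {}"
    unfolding Ddis_def by auto
  have "(\<Sum>D\<in>Gfam b a. f D) = (\<Sum>D\<in>(if Kagg b a \<noteq> {} then {Kagg b a} else {}). f D) + (\<Sum>D\<in>(\<lambda>k. {k}) ` Ddis b a. f D)"
    unfolding Gfam_def e by (rule sum.union_disjoint) (use fD disj in auto)
  also have "(\<Sum>D\<in>(\<lambda>k. {k}) ` Ddis b a. f D) = (\<Sum>k\<in>Ddis b a. f {k})"
    by (subst sum.reindex) (auto simp: inj_on_def)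
  finally show ?thesis by simp
qed

lemma S1g: "k \<in> Kb b \<Longrightarrow> (\<Sum>D\<in>{D\<in>Gfam b a. k \<in> D}. f D) =
   (if k \<in> Kagg b a then f (Kagg b a) else 0) + (if k \<in> Ddis b a then f {k} else 0)"
proof -
  assume kK: "k \<in> Kb b"
  have "{D\<in>Gfam b a. k \<in> D} = (if k \<in> Kagg b a then {Kagg b a} else {{k}})"
    using kK by (auto simp: Gfam_def Ddis_def)
  then show ?thesis using kK by (simp add: Ddis_def)
qed

lemma S2g: "k \<in> Kb b \<Longrightarrow> (\<Sum>D\<in>{D\<in>Gfam b a. D = {k}}. f D) =
   (if k \<in> Ddis b a then f {k} else 0) + (if Kagg b a = {k} then f {k} else 0)"
proof -
  assume kK: "k \<in> Kb b"
  have "{D\<in>Gfam b a. D = {k}} = (if k \<in> Ddis b a \<or> Kagg b a = {k} then {{k}} else {})"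
    using kK by (auto simp: Gfam_def Ddis_def)
  then show ?thesis by (auto simp: Ddis_def)
qed

lemma S2u: "(\<Sum>D\<in>{D\<in>Gfam b a. D = {k}}. f D) = (if {k} \<in> Gfam b a then f {k} else 0)"
proof -
  have "{D\<in>Gfam b a. D = {k}} = (if {k} \<in> Gfam b a then {{k}} else {})" by auto
  then show ?thesis by simp
qed

lemma S1u: "(\<Sum>D\<in>{D\<in>Gfam b a. k \<in> D}. f D) =
   (if k \<in> Kagg b a then f (Kagg b a) else 0) + (if k \<in> Ddis b a then f {k} else 0)"
proof -
  have "{D\<in>Gfam b a. k \<in> D} = (if k \<in> Kagg b a then {Kagg b a} else {}) \<union> (if k \<in> Ddis b a then {{k}} else {})"
    by (auto simp: Gfam_def Ddis_def)
  moreover have "\<not> (k \<in> Kagg b a \<and> k \<in> Ddis b a)" by (auto simp: Ddis_def)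
  ultimately show ?thesis by auto
qed

lemma Gmem: "D \<in> Gfam b a \<longleftrightarrow> (Kagg b a \<noteq> {} \<and> D = Kagg b a) \<or> (\<exists>k\<in>Ddis b a. D = {k})"
  unfolding Gfam_def by auto

definition exInst :: "(nat, nat) mcnd" where
  "exInst = \<lparr>nodes = {0,1,2,3}, arcs = {(0,1),(0,2),(2,1),(1,3),(2,3)}, comms = {0,1,2,3},
     orig = (\<lambda>_. 0), dest = (\<lambda>_. 3), dem = (\<lambda>_. 1), cap = (\<lambda>_. 4), ucost = (\<lambda>_. 0), fcost = (\<lambda>_. 0)\<rparr>"

definition exagg :: "nat \<times> nat \<Rightarrow> nat set" where
  "exagg a = (if a = (0,1) then {0,1} else if a = (2,1) then {2,3} else if a = (1,3) then {} else {0,1,2,3})"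

definition exb :: "(nat, nat) dispersion" where "exb = ({0,1,2,3}, exagg)"

definition exx :: "nat \<times> nat \<Rightarrow> nat set \<Rightarrow> real" where
  "exx a D = (if a = (0,1) then (if 0 \<in> D then 1 else 0)
     else if a = (0,2) then 3
     else if a = (2,1) then (if 2 \<in> D then 1 else 0)
     else if a = (2,3) then 2
     else if a = (1,3) then (if 0 \<in> D \<or> 1 \<in> D then 1 else 0) else 0)"

lemma ex_inst: "mcnd_instance exInst" unfolding mcnd_instance_def exInst_def by auto
lemma ex_pa: "partial_aggregation exInst {exb}"
  unfolding partial_aggregation_def dispersion_def exInst_def exb_def Kb_def Kagg_def exagg_def by auto

lemma ex_out: "outarcs exInst 0 = {(0,1),(0,2)}" "outarcs exInst 1 = {(1,3)}" "outarcs exInst 2 = {(2,1),(2,3)}" "outarcs exInst 3 = {}"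
  unfolding outarcs_def exInst_def by auto
lemma ex_out': "outarcs exInst (Suc 0) = {(1,3)}" using ex_out(2) by simp
lemma ex_in: "inarcs exInst 0 = {}" "inarcs exInst 1 = {(0,1),(2,1)}" "inarcs exInst 2 = {(0,2)}" "inarcs exInst 3 = {(1,3),(2,3)}"
  unfolding inarcs_def exInst_def by auto
lemma ex_in': "inarcs exInst (Suc 0) = {(0,1),(2,1)}" using ex_in(2) by simp
lemma ex_nodes: "nodes exInst = {0,1,2,3}" "arcs exInst = {(0,1),(0,2),(2,1),(1,3),(2,3)}" "comms exInst = {0,1,2,3}"
  unfolding exInst_def by auto
lemma ex_Kb: "Kb exb = {0,1,2,3}" unfolding exb_def Kb_def by simp
lemma ex_Kagg: "Kagg exb a = exagg a" unfolding exb_def Kagg_def by simp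
lemma ex_Ddis: "Ddis exb a = {0,1,2,3} - exagg a" unfolding Ddis_def ex_Kb ex_Kagg ..

lemma Gsum_ex: "(\<Sum>D\<in>Gfam exb a. f D) = (if exagg a \<noteq> {} then f (exagg a) else 0) + (\<Sum>k\<in>{0,1,2,3} - exagg a. f {k})"
  by (subst Gsum) (simp_all only: ex_Kb ex_Kagg ex_Ddis finite_insert finite.emptyI)

lemma ex_netdem: "netdem exInst i k = (if i = 0 then 1 else if i = 3 then -1 else 0)"
  unfolding netdem_def exInst_def by simp

lemma ex_PA: "PA_LP_feasible exInst {exb} exx (\<lambda>_. 1)"
  unfolding PA_LP_feasible_def
  apply (intro conjI)
  subgoal unfolding Gmem ex_nodes ex_Kagg ex_Ddis by (auto simp: exx_def exagg_def)
  subgoal by simp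
  subgoal by (simp add: ex_nodes ex_out ex_in ex_out' ex_in' Gsum_ex exagg_def exx_def ex_netdem ex_Kb)
  subgoal by (simp add: ex_nodes Gsum_ex exagg_def exx_def exInst_def)
  subgoal by (auto simp: Gmem ex_nodes ex_Kagg ex_Ddis exx_def exagg_def exInst_def)
  done

lemma ex_PAi: "PAi_LP_feasible exInst {exb} exx (\<lambda>_. 1)"
  unfolding PAi_LP_feasible_def
  apply (intro conjI ex_PA)
  unfolding S2u S1u
  apply (simp add: Gmem ex_Kb ex_nodes ex_out ex_in ex_out' ex_in' ex_Kagg ex_Ddis exagg_def)
  apply (simp add: exx_def ex_netdem)
  done

lemma filt_ins: "{x \<in> insert a A. P x} = (if P a then insert a {x\<in>A. P x} else {x\<in>A. P x})"
  "{x \<in> {}. P x} = {}" by auto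

lemma ex_notPAe: "\<not> (\<exists>zin zout. PAe_LP_feasible exInst {exb} exx (\<lambda>_. 1) zin zout)"
proof
  assume "\<exists>zin zout. PAe_LP_feasible exInst {exb} exx (\<lambda>_. 1) zin zout"
  then obtain zin zout where F: "PAe_LP_feasible exInst {exb} exx (\<lambda>_. 1) zin zout" by blast
  have L: "Lset exInst exb 1 = {0,1,2,3}"
    unfolding Lset_def ex_in ex_out ex_Kb ex_Ddis exagg_def by auto
  have ims: "{{k} | k. k \<in> A} = (\<lambda>k. {k}) ` A" for A :: "nat set" by auto
  have M: "Mset exInst exb 1 = {{0},{1},{2},{3}}" unfolding Mset_def L ex_Kb ims by simp
  have f1: "{a\<in>inarcs exInst 1. Kagg exb a \<noteq> {}} = {(0,1),(2,1)}"
    by (auto simp: ex_in ex_in' ex_Kagg exagg_def)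
  have Tin: "Tin exInst exb 1 = {{0,1},{2,3}}"
  proof -
    have "Tin exInst exb 1 = Kagg exb ` {a\<in>inarcs exInst 1. Kagg exb a \<noteq> {}}" unfolding Tin_def by blast
    then show ?thesis unfolding f1 by (simp add: ex_Kagg exagg_def insert_commute)
  qed
  have Tout: "Tout exInst exb 1 = {}" unfolding Tout_def ex_out ex_Kagg exagg_def by auto
  have n1: "(1::nat) \<in> nodes exInst" unfolding ex_nodes by simp
  note H1 = bspec[OF F[unfolded PAe_LP_feasible_def, THEN conjunct2], of exb, OF singletonI]
  note H2 = bspec[OF H1, of 1, OF n1]
  have Lne: "Lset exInst exb 1 \<noteq> {}" unfolding L by simp
  note H3 = mp[OF H2 Lne]
  note HE = H3[THEN conjunct2, THEN conjunct2, THEN conjunct1]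
  note HT = H3[THEN conjunct2, THEN conjunct2, THEN conjunct2, THEN conjunct1]
  have m2: "{2} \<in> Mset exInst exb 1" "{3} \<in> Mset exInst exb 1" unfolding M by simp_all
  have c23: "{2,3} \<in> Tin exInst exb 1" unfolding Tin by simp
  note E2 = bspec[OF HE m2(1)]
  note E3 = bspec[OF HE m2(2)]
  note T23 = bspec[OF HT c23]
  have s1: "{a \<in> outarcs exInst 1. \<exists>k. {2::nat} = {k} \<and> k \<in> Ddis exb a} = {(1,3)}"
    unfolding ex_out ex_Ddis exagg_def by auto
  have s2: "{a \<in> inarcs exInst 1. \<exists>k. {2::nat} = {k} \<and> k \<in> Ddis exb a} = {(0,1)}"
    unfolding ex_in ex_Ddis exagg_def by auto
  have s3: "{a \<in> outarcs exInst 1. \<exists>k. {3::nat} = {k} \<and> k \<in> Ddis exb a} = {(1,3)}"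
    unfolding ex_out ex_Ddis exagg_def by auto
  have s4: "{a \<in> inarcs exInst 1. \<exists>k. {3::nat} = {k} \<and> k \<in> Ddis exb a} = {(0,1)}"
    unfolding ex_in ex_Ddis exagg_def by auto
  have s5: "{C \<in> Tin exInst exb 1. C \<inter> {2} \<noteq> {}} = {{2,3}}" unfolding Tin filt_ins by simp
  have s6: "{C \<in> Tin exInst exb 1. C \<inter> {3} \<noteq> {}} = {{2,3}}" unfolding Tin filt_ins by simp
  have s7: "{C \<in> Tout exInst exb 1. C \<inter> D \<noteq> {}} = {}" for D unfolding Tout by auto
  have s8: "{D \<in> Mset exInst exb 1. {2,3} \<inter> D \<noteq> {}} = {{2},{3}}" unfolding M filt_ins by simp
  have ne: "({0,1}::nat set) \<noteq> {2,3}"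
  proof
    assume "({0,1}::nat set) = {2,3}"
    then have "(0::nat) \<in> {2,3}" by (metis insertI1)
    then show False by simp
  qed
  have s9: "{a \<in> inarcs exInst 1. Kagg exb a = {2,3}} = {(2,1)}"
    unfolding ex_in ex_Kagg filt_ins using ne by (simp add: exagg_def)
  have z2: "zin exb 1 {2,3} {2} = 0" using E2 unfolding s1 s2 s5 s7 by (simp add: exx_def ex_netdem)
  have z3: "zin exb 1 {2,3} {3} = 0" using E3 unfolding s3 s4 s6 s7 by (simp add: exx_def ex_netdem)
  have "zin exb 1 {2,3} {2} + zin exb 1 {2,3} {3} - 1 = 0" using T23 unfolding s8 s9 by (simp add: exx_def)
  then show False using z2 z3 by simp
qed

context
  fixes I :: "('n,'k) mcnd" and B b x y zin zout and i k
  assumes inst: "mcnd_instance I" and pa: "partial_aggregation I B"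
    and fe: "PAe_LP_feasible I B x y zin zout"
    and bB: "b \<in> B" and kK: "k \<in> Kb b" and iN: "i \<in> nodes I"
begin

lemma fin_arcs: "finite (arcs I)"
  using inst unfolding mcnd_instance_def by (meson finite_SigmaI finite_subset)
lemma fin_out: "finite (outarcs I i)" unfolding outarcs_def using fin_arcs by simp
lemma fin_in: "finite (inarcs I i)" unfolding inarcs_def using fin_arcs by simp
lemma disp: "dispersion I b" using pa bB unfolding partial_aggregation_def by blast
lemma finKb: "finite (Kb b)"
  using disp inst unfolding dispersion_def mcnd_instance_def by (meson finite_subset)
lemma agg_sub: "a \<in> arcs I \<Longrightarrow> Kagg b a \<subseteq> Kb b"
  using disp unfolding dispersion_def by blast
lemma pafe: "PA_LP_feasible I B x y" using fe unfolding PAe_LP_feasible_def by blast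
lemma xnn: "a \<in> arcs I \<Longrightarrow> D \<in> Gfam b a \<Longrightarrow> 0 \<le> x a D"
  using pafe bB unfolding PA_LP_feasible_def by blast

lemma S1: "(\<Sum>D\<in>{D\<in>Gfam b a. k \<in> D}. x a D) =
   (if k \<in> Kagg b a then x a (Kagg b a) else 0) + (if k \<in> Ddis b a then x a {k} else 0)"
proof -
  have "{D\<in>Gfam b a. k \<in> D} = (if k \<in> Kagg b a then {Kagg b a} else {{k}})"
    using kK by (auto simp: Gfam_def Ddis_def)
  then show ?thesis using kK by (simp add: Ddis_def)
qed

lemma S2: "(\<Sum>D\<in>{D\<in>Gfam b a. D = {k}}. x a D) =
   (if k \<in> Ddis b a then x a {k} else 0) + (if Kagg b a = {k} then x a {k} else 0)"
proof -
  have "{D\<in>Gfam b a. D = {k}} = (if k \<in> Ddis b a \<or> Kagg b a = {k} then {{k}} else {})"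
    using kK by (auto simp: Gfam_def Ddis_def)
  then show ?thesis by (auto simp: Ddis_def)
qed

lemma netdem_bounds:
  assumes S: "S \<subseteq> Kb b" and kS: "k \<in> S"
  shows "netdem I i k \<le> max 0 (\<Sum>k'\<in>S. netdem I i k') \<and> min 0 (\<Sum>k'\<in>S. netdem I i k') \<le> netdem I i k"
proof -
  have finS: "finite S" using S finKb finite_subset by blast
  have orig: "\<And>k'. k' \<in> S \<Longrightarrow> orig I k' = orig I k" using S kS disp unfolding dispersion_def by blast
  have dnn: "\<And>k'. k' \<in> S \<Longrightarrow> dem I k' \<ge> 0" using S disp inst unfolding dispersion_def mcnd_instance_def by blast
  have split: "(\<Sum>k'\<in>S. netdem I i k') = netdem I i k + (\<Sum>k'\<in>S-{k}. netdem I i k')"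
    using finS kS by (simp add: sum.remove)
  show ?thesis
  proof (cases "orig I k = i")
    case True
    then have "\<And>k'. k' \<in> S \<Longrightarrow> netdem I i k' \<ge> 0" using orig dnn by (auto simp: netdem_def)
    then have "(\<Sum>k'\<in>S-{k}. netdem I i k') \<ge> 0" "netdem I i k \<ge> 0" using kS by (auto intro: sum_nonneg)
    then show ?thesis using split by linarith
  next
    case False
    then have "\<And>k'. k' \<in> S \<Longrightarrow> netdem I i k' \<le> 0" using orig dnn by (auto simp: netdem_def)
    then have "(\<Sum>k'\<in>S-{k}. netdem I i k') \<le> 0" "netdem I i k \<le> 0" using kS by (auto intro: sum_nonpos)
    then show ?thesis using split by linarith
  qed
qed

definition "AggOut = (\<Sum>a\<in>outarcs I i. if k \<in> Kagg b a then x a (Kagg b a) else 0)"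
definition "AggIn = (\<Sum>a\<in>inarcs I i. if k \<in> Kagg b a then x a (Kagg b a) else 0)"
definition "DisOut = (\<Sum>a\<in>outarcs I i. if k \<in> Ddis b a then x a {k} else 0)"
definition "DisIn = (\<Sum>a\<in>inarcs I i. if k \<in> Ddis b a then x a {k} else 0)"
definition "SingOut = (\<Sum>a\<in>outarcs I i. if Kagg b a = {k} then x a {k} else 0)"
definition "SingIn = (\<Sum>a\<in>inarcs I i. if Kagg b a = {k} then x a {k} else 0)"

lemma PAi1_eq: "(\<Sum>a\<in>outarcs I i. \<Sum>D\<in>{D\<in>Gfam b a. k \<in> D}. x a D)
          - (\<Sum>a\<in>inarcs I i. \<Sum>D\<in>{D\<in>Gfam b a. D = {k}}. x a D) = AggOut + DisOut - DisIn - SingIn"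
  unfolding S1 S2 AggOut_def DisOut_def DisIn_def SingIn_def by (simp add: sum.distrib)
lemma PAi2_eq: "(\<Sum>a\<in>outarcs I i. \<Sum>D\<in>{D\<in>Gfam b a. D = {k}}. x a D)
          - (\<Sum>a\<in>inarcs I i. \<Sum>D\<in>{D\<in>Gfam b a. k \<in> D}. x a D) = DisOut + SingOut - AggIn - DisIn"
  unfolding S1 S2 AggIn_def DisOut_def DisIn_def SingOut_def by (simp add: sum.distrib)

lemma out_arcs: "a \<in> outarcs I i \<Longrightarrow> a \<in> arcs I" unfolding outarcs_def by auto
lemma in_arcs: "a \<in> inarcs I i \<Longrightarrow> a \<in> arcs I" unfolding inarcs_def by auto

lemma agg_in_G: "k \<in> Kagg b a \<Longrightarrow> Kagg b a \<in> Gfam b a" unfolding Gfam_def by auto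
lemma sing_in_G: "k \<in> Ddis b a \<Longrightarrow> {k} \<in> Gfam b a" unfolding Gfam_def by auto

lemma AggOut_nn: "AggOut \<ge> 0" unfolding AggOut_def
  by (rule sum_nonneg) (auto intro: xnn out_arcs agg_in_G)
lemma AggIn_nn: "AggIn \<ge> 0" unfolding AggIn_def
  by (rule sum_nonneg) (auto intro: xnn in_arcs agg_in_G)

lemma Kb_ne: "Kb b \<noteq> {}" using disp unfolding dispersion_def by blast

lemma caseL0:
  assumes L0: "Lset I b i = {}"
  shows "netdem I i k \<le> AggOut + DisOut - DisIn - SingIn \<and> DisOut + SingOut - AggIn - DisIn \<le> netdem I i k"
proof -
  have dis0: "Ddis b a = {}" if "a \<in> outarcs I i \<or> a \<in> inarcs I i" for a
  proof -
    have "Ddis b a \<subseteq> Kb b" unfolding Ddis_def by auto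
    then show ?thesis using L0 that unfolding Lset_def by blast
  qed
  have agg: "Kagg b a = Kb b" if "a \<in> outarcs I i \<or> a \<in> inarcs I i" for a
    using dis0[OF that] agg_sub[of a] that out_arcs in_arcs unfolding Ddis_def by blast
  have G: "Gfam b a = {Kb b}" if "a \<in> outarcs I i \<or> a \<in> inarcs I i" for a
    using dis0[OF that] agg[OF that] Kb_ne unfolding Gfam_def by auto
  define Out where "Out = (\<Sum>a\<in>outarcs I i. x a (Kb b))"
  define In where "In = (\<Sum>a\<in>inarcs I i. x a (Kb b))"
  have D0: "DisOut = 0" "DisIn = 0" unfolding DisOut_def DisIn_def using dis0 by auto
  have A: "AggOut = Out" "AggIn = In" unfolding AggOut_def AggIn_def Out_def In_def
    using agg kK by (auto intro!: sum.cong)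
  have Si: "SingOut = (if Kb b = {k} then Out else 0)" "SingIn = (if Kb b = {k} then In else 0)"
    unfolding SingOut_def SingIn_def Out_def In_def using agg by (auto intro!: sum.cong)
  have cons: "(\<Sum>a\<in>outarcs I i. \<Sum>D\<in>Gfam b a. x a D) - (\<Sum>a\<in>inarcs I i. \<Sum>D\<in>Gfam b a. x a D)
          = (\<Sum>k\<in>Kb b. netdem I i k)"
    using pafe bB iN unfolding PA_LP_feasible_def by blast
  have "(\<Sum>a\<in>outarcs I i. \<Sum>D\<in>Gfam b a. x a D) = Out" unfolding Out_def using G by (auto intro!: sum.cong)
  moreover have "(\<Sum>a\<in>inarcs I i. \<Sum>D\<in>Gfam b a. x a D) = In" unfolding In_def using G by (auto intro!: sum.cong)
  ultimately have cons': "Out - In = (\<Sum>k\<in>Kb b. netdem I i k)" using cons by simp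
  have "Out \<ge> 0" "In \<ge> 0" using AggOut_nn AggIn_nn A by auto
  moreover have nb: "netdem I i k \<le> max 0 (\<Sum>k'\<in>Kb b. netdem I i k') \<and> min 0 (\<Sum>k'\<in>Kb b. netdem I i k') \<le> netdem I i k"
    using netdem_bounds[of "Kb b"] kK by blast
  ultimately show ?thesis
  proof (cases "Kb b = {k}")
    case True
    then show ?thesis using cons' D0 A Si by simp
  next
    case False
    then show ?thesis using cons' D0 A Si nb \<open>Out \<ge> 0\<close> \<open>In \<ge> 0\<close> by (simp add: max_def min_def split: if_splits)
  qed
qed

lemma caseL1:
  assumes Lne: "Lset I b i \<noteq> {}"
  shows "netdem I i k \<le> AggOut + DisOut - DisIn - SingIn \<and> DisOut + SingOut - AggIn - DisIn \<le> netdem I i k"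
proof -
  define L where "L = Lset I b i"
  define M where "M = Mset I b i"
  define Dk where "Dk = (if k \<in> L then {k} else Kb b - L)"
  have fb: "(\<forall>C\<in>Tin I b i. \<forall>D\<in>Mset I b i. C \<inter> D \<noteq> {} \<longrightarrow> zin b i C D \<ge> 0) \<and>
        (\<forall>D\<in>Mset I b i. \<forall>C\<in>Tout I b i. C \<inter> D \<noteq> {} \<longrightarrow> zout b i D C \<ge> 0) \<and>
        (\<forall>D\<in>Mset I b i.
           (\<Sum>a\<in>{a\<in>outarcs I i. \<exists>k. D = {k} \<and> k \<in> Ddis b a}. x a D)
           - (\<Sum>a\<in>{a\<in>inarcs I i. \<exists>k. D = {k} \<and> k \<in> Ddis b a}. x a D)
           + (\<Sum>C\<in>{C\<in>Tout I b i. C \<inter> D \<noteq> {}}. zout b i D C)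
           - (\<Sum>C\<in>{C\<in>Tin I b i. C \<inter> D \<noteq> {}}. zin b i C D)
           = (\<Sum>k\<in>D. netdem I i k)) \<and>
        (\<forall>C\<in>Tin I b i.
           (\<Sum>D\<in>{D\<in>Mset I b i. C \<inter> D \<noteq> {}}. zin b i C D)
           - (\<Sum>a\<in>{a\<in>inarcs I i. Kagg b a = C}. x a C) = 0) \<and>
        (\<forall>C\<in>Tout I b i.
           (\<Sum>a\<in>{a\<in>outarcs I i. Kagg b a = C}. x a C)
           - (\<Sum>D\<in>{D\<in>Mset I b i. C \<inter> D \<noteq> {}}. zout b i D C) = 0)"
    using fe bB iN Lne unfolding PAe_LP_feasible_def by blast
  have zin_nn: "\<And>C D. C \<in> Tin I b i \<Longrightarrow> D \<in> M \<Longrightarrow> C \<inter> D \<noteq> {} \<Longrightarrow> zin b i C D \<ge> 0"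
    using fb unfolding M_def by blast
  have zout_nn: "\<And>C D. C \<in> Tout I b i \<Longrightarrow> D \<in> M \<Longrightarrow> C \<inter> D \<noteq> {} \<Longrightarrow> zout b i D C \<ge> 0"
    using fb unfolding M_def by blast
  have E: "\<And>D. D \<in> M \<Longrightarrow> (\<Sum>a\<in>{a\<in>outarcs I i. \<exists>k. D = {k} \<and> k \<in> Ddis b a}. x a D)
           - (\<Sum>a\<in>{a\<in>inarcs I i. \<exists>k. D = {k} \<and> k \<in> Ddis b a}. x a D)
           + (\<Sum>C\<in>{C\<in>Tout I b i. C \<inter> D \<noteq> {}}. zout b i D C)
           - (\<Sum>C\<in>{C\<in>Tin I b i. C \<inter> D \<noteq> {}}. zin b i C D)
           = (\<Sum>k\<in>D. netdem I i k)"
    using fb unfolding M_def by blast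
  have T: "\<And>C. C \<in> Tin I b i \<Longrightarrow> (\<Sum>a\<in>{a\<in>inarcs I i. Kagg b a = C}. x a C) =
           (\<Sum>D\<in>{D\<in>M. C \<inter> D \<noteq> {}}. zin b i C D)"
    using fb unfolding M_def by force
  have U: "\<And>C. C \<in> Tout I b i \<Longrightarrow> (\<Sum>a\<in>{a\<in>outarcs I i. Kagg b a = C}. x a C) =
           (\<Sum>D\<in>{D\<in>M. C \<inter> D \<noteq> {}}. zout b i D C)"
    using fb unfolding M_def by force
  have L_sub: "L \<subseteq> Kb b" unfolding L_def Lset_def by auto
  have finL: "finite L" using L_sub finKb finite_subset by blast
  have finM: "finite M" unfolding M_def Mset_def L_def[symmetric] using finL by auto
  have DkM: "Dk \<in> M" unfolding M_def Mset_def L_def[symmetric] Dk_def using kK by auto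
  have kDk: "k \<in> Dk" unfolding Dk_def using kK by auto
  have Dk_sub: "Dk \<subseteq> Kb b" unfolding Dk_def using kK by auto
  have uniq: "\<And>D'. D' \<in> M \<Longrightarrow> k \<in> D' \<Longrightarrow> D' = Dk"
    unfolding M_def Mset_def L_def[symmetric] Dk_def by (auto split: if_splits)
  have finTout: "finite (Tout I b i)"
  proof -
    have "Tout I b i = Kagg b ` {a\<in>outarcs I i. Kagg b a \<noteq> {}}" unfolding Tout_def by auto
    then show ?thesis using fin_out by simp
  qed
  have finTin: "finite (Tin I b i)"
  proof -
    have "Tin I b i = Kagg b ` {a\<in>inarcs I i. Kagg b a \<noteq> {}}" unfolding Tin_def by auto
    then show ?thesis using fin_in by simp
  qed
  have notL_agg: "k \<in> Kagg b a" if "k \<notin> L" "a \<in> outarcs I i \<or> a \<in> inarcs I i" for a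
    using that kK unfolding L_def Lset_def Ddis_def by blast
  have Tout_k: "(C \<inter> Dk \<noteq> {}) = (k \<in> C)" if CT: "C \<in> Tout I b i" for C
  proof (cases "k \<in> L")
    case True then show ?thesis unfolding Dk_def by auto
  next
    case False
    obtain a where "a \<in> outarcs I i" "C = Kagg b a" using CT unfolding Tout_def by blast
    then have "k \<in> C" using notL_agg False by blast
    then show ?thesis using kDk by blast
  qed
  have Tin_k: "(C \<inter> Dk \<noteq> {}) = (k \<in> C)" if CT: "C \<in> Tin I b i" for C
  proof (cases "k \<in> L")
    case True then show ?thesis unfolding Dk_def by auto
  next
    case False
    obtain a where "a \<in> inarcs I i" "C = Kagg b a" using CT unfolding Tin_def by blast
    then have "k \<in> C" using notL_agg False by blast
    then show ?thesis using kDk by blast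
  qed
  define ZO where "ZO = (\<Sum>C\<in>{C\<in>Tout I b i. k \<in> C}. zout b i Dk C)"
  define ZI where "ZI = (\<Sum>C\<in>{C\<in>Tin I b i. k \<in> C}. zin b i C Dk)"
  have ZO_eq: "(\<Sum>C\<in>{C\<in>Tout I b i. C \<inter> Dk \<noteq> {}}. zout b i Dk C) = ZO"
    proof -
    have "{C\<in>Tout I b i. C \<inter> Dk \<noteq> {}} = {C\<in>Tout I b i. k \<in> C}" using Tout_k by blast
    then show ?thesis unfolding ZO_def by simp
  qed
  have ZI_eq: "(\<Sum>C\<in>{C\<in>Tin I b i. C \<inter> Dk \<noteq> {}}. zin b i C Dk) = ZI"
    proof -
    have "{C\<in>Tin I b i. C \<inter> Dk \<noteq> {}} = {C\<in>Tin I b i. k \<in> C}" using Tin_k by blast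
    then show ?thesis unfolding ZI_def by simp
  qed
  have ZO_nn: "ZO \<ge> 0" unfolding ZO_def
    by (rule sum_nonneg) (use zout_nn DkM kDk in blast)
  have ZI_nn: "ZI \<ge> 0" unfolding ZI_def
    by (rule sum_nonneg) (use zin_nn DkM kDk in blast)

  have DisOut0: "DisOut = 0" if "k \<notin> L"
    unfolding DisOut_def using notL_agg[OF that] by (auto simp: Ddis_def intro!: sum.neutral)
  have DisIn0: "DisIn = 0" if "k \<notin> L"
    unfolding DisIn_def using notL_agg[OF that] by (auto simp: Ddis_def intro!: sum.neutral)
  have OD: "(\<Sum>a\<in>{a\<in>outarcs I i. \<exists>k'. Dk = {k'} \<and> k' \<in> Ddis b a}. x a Dk) = DisOut"
  proof (cases "k \<in> L")
    case True
    then have "{a\<in>outarcs I i. \<exists>k'. Dk = {k'} \<and> k' \<in> Ddis b a} = {a\<in>outarcs I i. k \<in> Ddis b a}"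
      unfolding Dk_def by auto
    then show ?thesis unfolding DisOut_def using True fin_out by (simp add: sum.inter_filter Dk_def)
  next
    case False
    have e: "{a\<in>outarcs I i. \<exists>k'. Dk = {k'} \<and> k' \<in> Ddis b a} = {}"
      using notL_agg[OF False] kDk by (auto simp: Ddis_def)
    show ?thesis unfolding e using DisOut0[OF False] by simp
  qed
  have ID: "(\<Sum>a\<in>{a\<in>inarcs I i. \<exists>k'. Dk = {k'} \<and> k' \<in> Ddis b a}. x a Dk) = DisIn"
  proof (cases "k \<in> L")
    case True
    then have "{a\<in>inarcs I i. \<exists>k'. Dk = {k'} \<and> k' \<in> Ddis b a} = {a\<in>inarcs I i. k \<in> Ddis b a}"
      unfolding Dk_def by auto
    then show ?thesis unfolding DisIn_def using True fin_in by (simp add: sum.inter_filter Dk_def)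
  next
    case False
    have e: "{a\<in>inarcs I i. \<exists>k'. Dk = {k'} \<and> k' \<in> Ddis b a} = {}"
      using notL_agg[OF False] kDk by (auto simp: Ddis_def)
    show ?thesis unfolding e using DisIn0[OF False] by simp
  qed
  have EDk: "DisOut - DisIn + ZO - ZI = (\<Sum>k\<in>Dk. netdem I i k)"
    using E[OF DkM] OD ID ZO_eq ZI_eq by simp
  have AggOut_eq: "AggOut = (\<Sum>C\<in>{C\<in>Tout I b i. k \<in> C}. \<Sum>D\<in>{D\<in>M. C \<inter> D \<noteq> {}}. zout b i D C)"
  proof -
    have "AggOut = (\<Sum>a\<in>{a\<in>outarcs I i. k \<in> Kagg b a}. x a (Kagg b a))"
      unfolding AggOut_def using fin_out by (simp add: sum.inter_filter)
    also have "\<dots> = (\<Sum>C\<in>{C\<in>Tout I b i. k \<in> C}. \<Sum>a\<in>{a. a \<in> {a\<in>outarcs I i. k \<in> Kagg b a} \<and> Kagg b a = C}. x a (Kagg b a))"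
      by (rule sum.group[symmetric]) (use fin_out finTout in \<open>auto simp: Tout_def\<close>)
    also have "\<dots> = (\<Sum>C\<in>{C\<in>Tout I b i. k \<in> C}. \<Sum>D\<in>{D\<in>M. C \<inter> D \<noteq> {}}. zout b i D C)"
    proof (rule sum.cong[OF refl])
      fix C assume C: "C \<in> {C\<in>Tout I b i. k \<in> C}"
      have "{a. a \<in> {a\<in>outarcs I i. k \<in> Kagg b a} \<and> Kagg b a = C} = {a\<in>outarcs I i. Kagg b a = C}"
        using C by auto
      then have "(\<Sum>a\<in>{a. a \<in> {a\<in>outarcs I i. k \<in> Kagg b a} \<and> Kagg b a = C}. x a (Kagg b a))
          = (\<Sum>a\<in>{a\<in>outarcs I i. Kagg b a = C}. x a C)" by (auto intro!: sum.cong)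
      then show "(\<Sum>a\<in>{a. a \<in> {a\<in>outarcs I i. k \<in> Kagg b a} \<and> Kagg b a = C}. x a (Kagg b a))
          = (\<Sum>D\<in>{D\<in>M. C \<inter> D \<noteq> {}}. zout b i D C)" using U C by simp
    qed
    finally show ?thesis .
  qed
  have AggIn_eq: "AggIn = (\<Sum>C\<in>{C\<in>Tin I b i. k \<in> C}. \<Sum>D\<in>{D\<in>M. C \<inter> D \<noteq> {}}. zin b i C D)"
  proof -
    have "AggIn = (\<Sum>a\<in>{a\<in>inarcs I i. k \<in> Kagg b a}. x a (Kagg b a))"
      unfolding AggIn_def using fin_in by (simp add: sum.inter_filter)
    also have "\<dots> = (\<Sum>C\<in>{C\<in>Tin I b i. k \<in> C}. \<Sum>a\<in>{a. a \<in> {a\<in>inarcs I i. k \<in> Kagg b a} \<and> Kagg b a = C}. x a (Kagg b a))"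
      by (rule sum.group[symmetric]) (use fin_in finTin in \<open>auto simp: Tin_def\<close>)
    also have "\<dots> = (\<Sum>C\<in>{C\<in>Tin I b i. k \<in> C}. \<Sum>D\<in>{D\<in>M. C \<inter> D \<noteq> {}}. zin b i C D)"
    proof (rule sum.cong[OF refl])
      fix C assume C: "C \<in> {C\<in>Tin I b i. k \<in> C}"
      have "{a. a \<in> {a\<in>inarcs I i. k \<in> Kagg b a} \<and> Kagg b a = C} = {a\<in>inarcs I i. Kagg b a = C}"
        using C by auto
      then have "(\<Sum>a\<in>{a. a \<in> {a\<in>inarcs I i. k \<in> Kagg b a} \<and> Kagg b a = C}. x a (Kagg b a))
          = (\<Sum>a\<in>{a\<in>inarcs I i. Kagg b a = C}. x a C)" by (auto intro!: sum.cong)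
      then show "(\<Sum>a\<in>{a. a \<in> {a\<in>inarcs I i. k \<in> Kagg b a} \<and> Kagg b a = C}. x a (Kagg b a))
          = (\<Sum>D\<in>{D\<in>M. C \<inter> D \<noteq> {}}. zin b i C D)" using T C by simp
    qed
    finally show ?thesis .
  qed
  have AggOut_ge: "ZO \<le> AggOut" unfolding AggOut_eq ZO_def
  proof (rule sum_mono)
    fix C assume C: "C \<in> {C\<in>Tout I b i. k \<in> C}"
    show "zout b i Dk C \<le> (\<Sum>D\<in>{D\<in>M. C \<inter> D \<noteq> {}}. zout b i D C)"
    proof (rule member_le_sum)
      show "Dk \<in> {D\<in>M. C \<inter> D \<noteq> {}}" using C DkM kDk by blast
      show "finite {D\<in>M. C \<inter> D \<noteq> {}}" using finM by simp
      fix D assume "D \<in> {D\<in>M. C \<inter> D \<noteq> {}} - {Dk}"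
      then show "0 \<le> zout b i D C" using C zout_nn[of C D] by blast
    qed
  qed
  have AggIn_ge: "ZI \<le> AggIn" unfolding AggIn_eq ZI_def
  proof (rule sum_mono)
    fix C assume C: "C \<in> {C\<in>Tin I b i. k \<in> C}"
    show "zin b i C Dk \<le> (\<Sum>D\<in>{D\<in>M. C \<inter> D \<noteq> {}}. zin b i C D)"
    proof (rule member_le_sum)
      show "Dk \<in> {D\<in>M. C \<inter> D \<noteq> {}}" using C DkM kDk by blast
      show "finite {D\<in>M. C \<inter> D \<noteq> {}}" using finM by simp
      fix D assume "D \<in> {D\<in>M. C \<inter> D \<noteq> {}} - {Dk}"
      then show "0 \<le> zin b i C D" using C zin_nn[of C D] by blast
    qed
  qed
  have singM: "{D\<in>M. {k} \<inter> D \<noteq> {}} = {Dk}"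
  proof (intro set_eqI iffI)
    fix D assume "D \<in> {D\<in>M. {k} \<inter> D \<noteq> {}}"
    then have "D \<in> M" "k \<in> D" by auto
    then show "D \<in> {Dk}" using uniq by blast
  next
    fix D assume "D \<in> {Dk}"
    then show "D \<in> {D\<in>M. {k} \<inter> D \<noteq> {}}" using DkM kDk by auto
  qed
  have SingOut_le: "SingOut \<le> ZO"
  proof -
    have SO: "SingOut = (\<Sum>a\<in>{a\<in>outarcs I i. Kagg b a = {k}}. x a {k})"
      unfolding SingOut_def using fin_out by (simp add: sum.inter_filter)
    show ?thesis
    proof (cases "{a\<in>outarcs I i. Kagg b a = {k}} = {}")
      case True show ?thesis unfolding SO True using ZO_nn by simp
    next
      case False
      then obtain a where "a \<in> outarcs I i" "Kagg b a = {k}" by blast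
      then have kT: "{k} \<in> Tout I b i" unfolding Tout_def by blast
      have "SingOut = zout b i Dk {k}" using SO U[OF kT] singM by simp
      also have "\<dots> \<le> ZO" unfolding ZO_def
      proof (rule member_le_sum)
        show "{k} \<in> {C\<in>Tout I b i. k \<in> C}" using kT by simp
        show "finite {C\<in>Tout I b i. k \<in> C}" using finTout by simp
        fix C assume "C \<in> {C\<in>Tout I b i. k \<in> C} - {{k}}"
        then have "C \<in> Tout I b i" "k \<in> C" by auto
        then show "0 \<le> zout b i Dk C" using zout_nn[of C Dk] DkM Tout_k[of C] by blast
      qed
      finally show ?thesis .
    qed
  qed
  have SingIn_le: "SingIn \<le> ZI"
  proof -
    have SO: "SingIn = (\<Sum>a\<in>{a\<in>inarcs I i. Kagg b a = {k}}. x a {k})"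
      unfolding SingIn_def using fin_in by (simp add: sum.inter_filter)
    show ?thesis
    proof (cases "{a\<in>inarcs I i. Kagg b a = {k}} = {}")
      case True show ?thesis unfolding SO True using ZI_nn by simp
    next
      case False
      then obtain a where "a \<in> inarcs I i" "Kagg b a = {k}" by blast
      then have kT: "{k} \<in> Tin I b i" unfolding Tin_def by blast
      have "SingIn = zin b i {k} Dk" using SO T[OF kT] singM by simp
      also have "\<dots> \<le> ZI" unfolding ZI_def
      proof (rule member_le_sum)
        show "{k} \<in> {C\<in>Tin I b i. k \<in> C}" using kT by simp
        show "finite {C\<in>Tin I b i. k \<in> C}" using finTin by simp
        fix C assume "C \<in> {C\<in>Tin I b i. k \<in> C} - {{k}}"
        then have "C \<in> Tin I b i" "k \<in> C" by auto
        then show "0 \<le> zin b i C Dk" using zin_nn[of C Dk] DkM Tin_k[of C] by blast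
      qed
      finally show ?thesis .
    qed
  qed
  show ?thesis
  proof (cases "Dk = {k}")
    case True
    then show ?thesis using EDk AggOut_ge AggIn_ge SingOut_le SingIn_le by simp
  next
    case False
    then have kL: "k \<notin> L" unfolding Dk_def by auto
    have noSing: "Kagg b a \<noteq> {k}" if a: "a \<in> outarcs I i \<or> a \<in> inarcs I i" for a
    proof
      assume ag: "Kagg b a = {k}"
      have "Kb b - L \<subseteq> {k}"
      proof
        fix k' assume k': "k' \<in> Kb b - L"
        show "k' \<in> {k}"
        proof (rule ccontr)
          assume "k' \<notin> {k}"
          then have "k' \<in> Ddis b a" using k' ag unfolding Ddis_def by auto
          then have "k' \<in> L" using k' a unfolding L_def Lset_def by auto
          then show False using k' by auto
        qed
      qed
      then have "Dk = {k}" using kL kDk unfolding Dk_def by auto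
      then show False using False by simp
    qed
    have S0: "SingOut = 0" "SingIn = 0" unfolding SingOut_def SingIn_def using noSing by auto
    have nb: "netdem I i k \<le> max 0 (\<Sum>k'\<in>Dk. netdem I i k') \<and> min 0 (\<Sum>k'\<in>Dk. netdem I i k') \<le> netdem I i k"
      using netdem_bounds[OF Dk_sub kDk] .
    define N where "N = (\<Sum>k'\<in>Dk. netdem I i k')"
    have NZ: "N = ZO - ZI" using EDk DisOut0[OF kL] DisIn0[OF kL] unfolding N_def by linarith
    have g1: "max 0 N \<le> AggOut" unfolding max.bounded_iff using NZ AggOut_ge ZI_nn AggOut_nn by linarith
    have g2: "- AggIn \<le> min 0 N" unfolding min.bounded_iff using NZ AggIn_ge ZO_nn AggIn_nn by linarith
    show ?thesis using nb g1 g2 S0 DisOut0[OF kL] DisIn0[OF kL] unfolding N_def[symmetric] by linarith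
  qed
qed

lemma PAi_both: "netdem I i k \<le> (\<Sum>a\<in>outarcs I i. \<Sum>D\<in>{D\<in>Gfam b a. k \<in> D}. x a D)
          - (\<Sum>a\<in>inarcs I i. \<Sum>D\<in>{D\<in>Gfam b a. D = {k}}. x a D) \<and>
        (\<Sum>a\<in>outarcs I i. \<Sum>D\<in>{D\<in>Gfam b a. D = {k}}. x a D)
          - (\<Sum>a\<in>inarcs I i. \<Sum>D\<in>{D\<in>Gfam b a. k \<in> D}. x a D) \<le> netdem I i k"
  unfolding PAi1_eq PAi2_eq using caseL0 caseL1 by blast

end

theorem theorem2:
  shows "(\<forall>(I :: ('n, 'k) mcnd) B x y zin zout.
            mcnd_instance I \<and> partial_aggregation I B \<and> PAe_LP_feasible I B x y zin zout
            \<longrightarrow> PAi_LP_feasible I B x y \<and> pa_obj I B x y = pae_obj I B x y zin zout)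
       \<and> (\<exists>(I :: (nat, nat) mcnd) B x y.
            mcnd_instance I \<and> partial_aggregation I B \<and> PAi_LP_feasible I B x y \<and>
            \<not> (\<exists>zin zout. PAe_LP_feasible I B x y zin zout))"
proof (rule conjI)
  show "\<forall>(I :: ('n, 'k) mcnd) B x y zin zout.
            mcnd_instance I \<and> partial_aggregation I B \<and> PAe_LP_feasible I B x y zin zout
            \<longrightarrow> PAi_LP_feasible I B x y \<and> pa_obj I B x y = pae_obj I B x y zin zout"
  proof (intro allI impI)
    fix I :: "('n, 'k) mcnd" and B x y zin zout
    assume H: "mcnd_instance I \<and> partial_aggregation I B \<and> PAe_LP_feasible I B x y zin zout"
    then have inst: "mcnd_instance I" and pa: "partial_aggregation I B"
      and fe: "PAe_LP_feasible I B x y zin zout" by auto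
    have "PA_LP_feasible I B x y" using fe unfolding PAe_LP_feasible_def by blast
    moreover have "\<forall>b\<in>B. \<forall>k\<in>Kb b. \<forall>i\<in>nodes I.
        (\<Sum>a\<in>outarcs I i. \<Sum>D\<in>{D\<in>Gfam b a. k \<in> D}. x a D)
          - (\<Sum>a\<in>inarcs I i. \<Sum>D\<in>{D\<in>Gfam b a. D = {k}}. x a D) \<ge> netdem I i k \<and>
        (\<Sum>a\<in>outarcs I i. \<Sum>D\<in>{D\<in>Gfam b a. D = {k}}. x a D)
          - (\<Sum>a\<in>inarcs I i. \<Sum>D\<in>{D\<in>Gfam b a. k \<in> D}. x a D) \<le> netdem I i k"
      using PAi_both[OF inst pa fe] by blast
    ultimately have "PAi_LP_feasible I B x y" unfolding PAi_LP_feasible_def by blast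
    then show "PAi_LP_feasible I B x y \<and> pa_obj I B x y = pae_obj I B x y zin zout"
      by (simp add: pae_obj_def)
  qed
next
  show "\<exists>(I :: (nat, nat) mcnd) B x y.
            mcnd_instance I \<and> partial_aggregation I B \<and> PAi_LP_feasible I B x y \<and>
            \<not> (\<exists>zin zout. PAe_LP_feasible I B x y zin zout)"
    using ex_inst ex_pa ex_PAi ex_notPAe by blast
qed

end
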